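(* Let $X = \langle x_1,\dots,x_L\rangle$ be a random sequence with distribution $p$ over $\mathcal{V}^L$ for a finite vocabulary $\mathcal{V}$, fix distinct indices $i,j$ and fix the values of the other tokens $X_{\setminus\{i,j\}}$. Let $p_\theta(\cdot \mid X_{\setminus i})$ be any model assigning, for every masked sequence $X_{\setminus i}$, a probability distribution over $\mathcal{V}$ for the masked token. Define $$I_p = \mathbb{E}_{x_i,x_j}\Big[\log p\big(x_i \mid X_{\setminus i}(j,x_j)\big) - \log \mathbb{E}_{x_j'}\, p\big(x_i \mid X_{\setminus i}(j,x_j')\big)\Big],$$ $$\hat I_{p_\theta} = \mathbb{E}_{x_i,x_j}\Big[\log p_\theta\big(x_i \mid X_{\setminus i}(j,x_j)\big) - \log \mathbb{E}_{x_j'}\, p_\theta\big(x_i \mid X_{\setminus i}(j,x_j')\big)\Big],$$ where $(x_i,x_j)$ is drawn from the true conditional distribution $p(x_i,x_j \mid X_{\setminus\{i,j\}})$ and $x_j'$ is drawn from $p(x_j \mid X_{\setminus\{i,j\}})$ (so $I_p = I_p(x_i;x_j\mid X_{\setminus\{i,j\}})$ is the conditional mutual information). Then $$\big|\hat I_{p_\theta} - I_p\big| \le \mathbb{E}_{x_j}\, D_{\mathrm{KL}}\Big(p\big(x_i \mid X_{\setminus i}(j,x_j)\big)\,\Big\|\, p_\theta\big(x_i \mid X_{\setminus i}(j,x_j)\big)\Big),$$ with $x_j \sim p(x_j\mid X_{\setminus\{i,j\}})$.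
   Context: For a sequence $X$, $X_{\setminus i}$ denotes $X$ with the $i$th token replaced by a special mask token, and $X_{\setminus\{i,j\}}$ denotes $X$ with both the $i$th and $j$th tokens masked. $X(j,v)$ denotes $X$ with its $j$th token replaced by $v \in \mathcal{V}$; thus $X_{\setminus i}(j,x_j)$ is the sequence with token $i$ masked, token $j$ equal to $x_j$, and all other tokens fixed. $D_{\mathrm{KL}}$ is the Kullback–Leibler divergence (possibly $+\infty$, in which case the bound is trivial). *)

theory Defs
  imports "HOL-Probability.Probability"
begin

text \<open>Sequences are functions from a finite position type 'i (the L positions) to a
finite vocabulary 'v.  A masked sequence is a function 'i => 'v option, where None
is the mask token.\<close>

definition mask1 :: "'i \<Rightarrow> ('i \<Rightarrow> 'v) \<Rightarrow> ('i \<Rightarrow> 'v option)" where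
  "mask1 i y = (\<lambda>k. if k = i then None else Some (y k))"

definition cond_tok :: "('i \<Rightarrow> 'v::finite) pmf \<Rightarrow> 'i \<Rightarrow> ('i \<Rightarrow> 'v) \<Rightarrow> 'v \<Rightarrow> real" where
  "cond_tok p i y a = pmf p (y(i := a)) / (\<Sum>a'\<in>UNIV. pmf p (y(i := a')))"

definition cond_pair :: "('i \<Rightarrow> 'v::finite) pmf \<Rightarrow> 'i \<Rightarrow> 'i \<Rightarrow> ('i \<Rightarrow> 'v) \<Rightarrow> 'v \<Rightarrow> 'v \<Rightarrow> real" where
  "cond_pair p i j x0 a b = pmf p (x0(i := a, j := b)) /
     (\<Sum>a'\<in>UNIV. \<Sum>b'\<in>UNIV. pmf p (x0(i := a', j := b')))"

definition cond_j :: "('i \<Rightarrow> 'v::finite) pmf \<Rightarrow> 'i \<Rightarrow> 'i \<Rightarrow> ('i \<Rightarrow> 'v) \<Rightarrow> 'v \<Rightarrow> real" where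
  "cond_j p i j x0 b = (\<Sum>a\<in>UNIV. cond_pair p i j x0 a b)"

definition I_true :: "('i \<Rightarrow> 'v::finite) pmf \<Rightarrow> 'i \<Rightarrow> 'i \<Rightarrow> ('i \<Rightarrow> 'v) \<Rightarrow> real" where
  "I_true p i j x0 = (\<Sum>a\<in>UNIV. \<Sum>b\<in>UNIV. cond_pair p i j x0 a b *
      (ln (cond_tok p i (x0(j := b)) a)
       - ln (\<Sum>b'\<in>UNIV. cond_j p i j x0 b' * cond_tok p i (x0(j := b')) a)))"

definition I_model :: "('i \<Rightarrow> 'v::finite) pmf \<Rightarrow> (('i \<Rightarrow> 'v option) \<Rightarrow> 'v pmf)
      \<Rightarrow> 'i \<Rightarrow> 'i \<Rightarrow> ('i \<Rightarrow> 'v) \<Rightarrow> real" where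
  "I_model p pth i j x0 = (\<Sum>a\<in>UNIV. \<Sum>b\<in>UNIV. cond_pair p i j x0 a b *
      (ln (pmf (pth (mask1 i (x0(j := b)))) a)
       - ln (\<Sum>b'\<in>UNIV. cond_j p i j x0 b' * pmf (pth (mask1 i (x0(j := b')))) a)))"

definition KL :: "('v::finite \<Rightarrow> real) \<Rightarrow> ('v \<Rightarrow> real) \<Rightarrow> ereal" where
  "KL P Q = (if \<exists>a. P a > 0 \<and> Q a = 0 then \<infinity>
             else ereal (\<Sum>a\<in>{a. P a > 0}. P a * ln (P a / Q a)))"

end

theory Submission imports Defs begin

lemma core:
  fixes P :: "'v::finite \<Rightarrow> 'b::finite \<Rightarrow> real" and Q M :: "'b \<Rightarrow> 'v \<Rightarrow> real"
    and w :: "'b \<Rightarrow> real"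
  assumes Pnn: "\<And>a b. P a b \<ge> 0" and Psum: "(\<Sum>a\<in>UNIV. \<Sum>b\<in>UNIV. P a b) = 1"
    and Mnn: "\<And>a b. M b a \<ge> 0" and Msum: "\<And>b. (\<Sum>a\<in>UNIV. M b a) = 1"
    and w: "\<And>b. w b = (\<Sum>a\<in>UNIV. P a b)"
    and PQ: "\<And>a b. P a b = w b * Q b a"
    and pos: "\<And>a b. P a b > 0 \<Longrightarrow> Q b a > 0 \<and> M b a > 0"
  defines "Mb \<equiv> (\<lambda>a. \<Sum>b\<in>UNIV. w b * M b a)"
    and "m \<equiv> (\<lambda>a. \<Sum>b\<in>UNIV. w b * Q b a)"
  shows "\<bar>(\<Sum>a\<in>UNIV. \<Sum>b\<in>UNIV. P a b * (ln (M b a) - ln (Mb a)))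
         - (\<Sum>a\<in>UNIV. \<Sum>b\<in>UNIV. P a b * (ln (Q b a) - ln (m a)))\<bar>
       \<le> (\<Sum>a\<in>UNIV. \<Sum>b\<in>UNIV. P a b * (ln (Q b a) - ln (M b a)))"
proof -
  have wnn: "w b \<ge> 0" for b using w Pnn by (simp add: sum_nonneg)
  have wsum: "(\<Sum>b\<in>UNIV. w b) = 1" using Psum w sum.swap[of P UNIV UNIV] by simp
  have m_eq: "m a = (\<Sum>b\<in>UNIV. P a b)" for a unfolding m_def using PQ by simp
  have mnn: "m a \<ge> 0" for a using m_eq Pnn by (simp add: sum_nonneg)
  have msum: "(\<Sum>a\<in>UNIV. m a) = 1" using m_eq Psum by simp
  have Mbnn: "Mb a \<ge> 0" for a unfolding Mb_def using wnn Mnn by (simp add: sum_nonneg)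
  have Mbsum: "(\<Sum>a\<in>UNIV. Mb a) = 1"
  proof -
    have "(\<Sum>a\<in>UNIV. Mb a) = (\<Sum>b\<in>UNIV. \<Sum>a\<in>UNIV. w b * M b a)"
      unfolding Mb_def by (rule sum.swap)
    also have "\<dots> = (\<Sum>b\<in>UNIV. w b)" by (simp add: sum_distrib_left[symmetric] Msum)
    finally show ?thesis using wsum by simp
  qed
  have posfacts: "w b > 0 \<and> Q b a > 0 \<and> M b a > 0 \<and> m a > 0 \<and> Mb a > 0" if "P a b > 0" for a b
  proof -
    have Q: "Q b a > 0" and M: "M b a > 0" using pos[OF that] by auto
    have "w b \<noteq> 0" using that PQ[of a b] by auto
    hence wp: "w b > 0" using wnn[of b] by simp
    have "P a b \<le> m a" unfolding m_eq using Pnn by (intro member_le_sum) auto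
    hence mp: "m a > 0" using that by simp
    have "w b * M b a \<le> Mb a" unfolding Mb_def using wnn Mnn
      by (intro member_le_sum) (auto intro: mult_nonneg_nonneg)
    moreover have "w b * M b a > 0" by (rule mult_pos_pos[OF wp M])
    ultimately have "Mb a > 0" by (rule less_le_trans[rotated])
    thus ?thesis using wp Q M mp by blast
  qed
  define A where "A = (\<Sum>a\<in>UNIV. \<Sum>b\<in>UNIV. P a b * (ln (M b a) - ln (Q b a)))"
  define B where "B = (\<Sum>a\<in>UNIV. \<Sum>b\<in>UNIV. P a b * (ln (Mb a) - ln (m a)))"
  have diff: "(\<Sum>a\<in>UNIV. \<Sum>b\<in>UNIV. P a b * (ln (M b a) - ln (Mb a)))
         - (\<Sum>a\<in>UNIV. \<Sum>b\<in>UNIV. P a b * (ln (Q b a) - ln (m a))) = A - B"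
    unfolding A_def B_def sum_subtractf[symmetric] by (intro sum.cong refl) (simp add: algebra_simps)
  have rhs: "(\<Sum>a\<in>UNIV. \<Sum>b\<in>UNIV. P a b * (ln (Q b a) - ln (M b a))) = - A"
    unfolding A_def sum_negf[symmetric] by (intro sum.cong refl) (simp add: algebra_simps)
  have tB: "P a b * (ln (Mb a) - ln (m a)) \<le> P a b * Mb a / m a - P a b" for a b
  proof (cases "P a b > 0")
    case True
    note f = posfacts[OF True]
    have "ln (Mb a) - ln (m a) = ln (Mb a / m a)" using f by (simp add: ln_div)
    also have "\<dots> \<le> Mb a / m a - 1" using f by (intro ln_le_minus_one) simp
    finally have "P a b * (ln (Mb a) - ln (m a)) \<le> P a b * (Mb a / m a - 1)"
      using True by (intro mult_left_mono) auto
    thus ?thesis by (simp add: algebra_simps)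
  next
    case False
    hence "P a b = 0" using Pnn[of a b] by simp
    thus ?thesis by simp
  qed
  have "B \<le> (\<Sum>a\<in>UNIV. \<Sum>b\<in>UNIV. P a b * Mb a / m a - P a b)"
    unfolding B_def by (intro sum_mono tB)
  also have "\<dots> = (\<Sum>a\<in>UNIV. Mb a / m a * m a) - 1"
    by (simp add: sum_subtractf Psum m_eq sum_divide_distrib[symmetric] sum_distrib_left[symmetric]
        mult.commute)
  also have "\<dots> \<le> (\<Sum>a\<in>UNIV. Mb a) - 1"
  proof -
    have "Mb a / m a * m a \<le> Mb a" for a using Mbnn[of a] by (cases "m a = 0") auto
    thus ?thesis by (simp add: sum_mono)
  qed
  finally have Ble: "B \<le> 0" using Mbsum by simp
  have tC: "P a b * (ln (M b a) - ln (Q b a) - (ln (Mb a) - ln (m a)))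
      \<le> w b * M b a * (m a / Mb a) - P a b" for a b
  proof (cases "P a b > 0")
    case True
    note f = posfacts[OF True]
    have "ln (M b a) - ln (Q b a) - (ln (Mb a) - ln (m a)) = ln (M b a * m a / (Q b a * Mb a))"
      using f by (simp add: ln_div ln_mult)
    also have "\<dots> \<le> M b a * m a / (Q b a * Mb a) - 1" using f by (intro ln_le_minus_one) simp
    finally have "P a b * (ln (M b a) - ln (Q b a) - (ln (Mb a) - ln (m a)))
        \<le> P a b * (M b a * m a / (Q b a * Mb a) - 1)"
      using True by (intro mult_left_mono) auto
    also have "\<dots> = w b * M b a * (m a / Mb a) - P a b"
      using f PQ[of a b] by (simp add: field_simps)
    finally show ?thesis .
  next
    case False
    hence "P a b = 0" using Pnn[of a b] by simp
    moreover have "w b * M b a * (m a / Mb a) \<ge> 0" using wnn Mnn mnn Mbnn by simp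
    ultimately show ?thesis by simp
  qed
  have "A - B = (\<Sum>a\<in>UNIV. \<Sum>b\<in>UNIV. P a b * (ln (M b a) - ln (Q b a) - (ln (Mb a) - ln (m a))))"
    unfolding A_def B_def sum_subtractf[symmetric] by (intro sum.cong refl) (simp add: algebra_simps)
  also have "\<dots> \<le> (\<Sum>a\<in>UNIV. \<Sum>b\<in>UNIV. w b * M b a * (m a / Mb a) - P a b)"
    by (intro sum_mono tC)
  also have "\<dots> = (\<Sum>a\<in>UNIV. m a / Mb a * Mb a) - 1"
  proof -
    have inner: "(\<Sum>b\<in>UNIV. w b * M b a * (m a / Mb a)) = m a / Mb a * Mb a" for a
    proof -
      have "(\<Sum>b\<in>UNIV. w b * M b a * (m a / Mb a)) = m a / Mb a * (\<Sum>b\<in>UNIV. w b * M b a)"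
        by (simp add: sum_distrib_left mult_ac)
      also have "(\<Sum>b\<in>UNIV. w b * M b a) = Mb a" by (simp add: Mb_def)
      finally show ?thesis .
    qed
    have "(\<Sum>a\<in>UNIV. \<Sum>b\<in>UNIV. w b * M b a * (m a / Mb a) - P a b)
        = (\<Sum>a\<in>UNIV. \<Sum>b\<in>UNIV. w b * M b a * (m a / Mb a)) - (\<Sum>a\<in>UNIV. \<Sum>b\<in>UNIV. P a b)"
      by (simp only: sum_subtractf)
    also have "\<dots> = (\<Sum>a\<in>UNIV. m a / Mb a * Mb a) - 1"
      by (simp only: inner Psum)
    finally show ?thesis .
  qed
  also have "\<dots> \<le> (\<Sum>a\<in>UNIV. m a) - 1"
  proof -
    have "m a / Mb a * Mb a \<le> m a" for a using mnn[of a] by (cases "Mb a = 0") auto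
    thus ?thesis by (simp add: sum_mono)
  qed
  finally have AB: "A - B \<le> 0" using msum by simp
  show ?thesis unfolding diff rhs using AB Ble by linarith
qed


theorem proposition4:
  fixes p :: "('i::finite \<Rightarrow> 'v::finite) pmf"
    and pth :: "('i \<Rightarrow> 'v option) \<Rightarrow> 'v pmf"
    and i j :: 'i
    and x0 :: "'i \<Rightarrow> 'v"
  assumes "i \<noteq> j"
    and "(\<Sum>a\<in>UNIV. \<Sum>b\<in>UNIV. pmf p (x0(i := a, j := b))) > 0"
  shows "ereal \<bar>I_model p pth i j x0 - I_true p i j x0\<bar>
     \<le> (\<Sum>b\<in>UNIV. ereal (cond_j p i j x0 b) *
          KL (\<lambda>a. cond_tok p i (x0(j := b)) a) (\<lambda>a. pmf (pth (mask1 i (x0(j := b)))) a))"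
proof -
  define Z where "Z = (\<Sum>a\<in>UNIV. \<Sum>b\<in>UNIV. pmf p (x0(i := a, j := b)))"
  have Zp: "Z > 0" using assms(2) Z_def by simp
  define P where "P = cond_pair p i j x0"
  define w where "w = cond_j p i j x0"
  define Q where "Q = (\<lambda>b a. cond_tok p i (x0(j := b)) a)"
  define M where "M = (\<lambda>b a. pmf (pth (mask1 i (x0(j := b)))) a)"
  have Pdef: "P a b = pmf p (x0(i := a, j := b)) / Z" for a b
    unfolding P_def cond_pair_def Z_def by simp
  have Pnn: "P a b \<ge> 0" for a b using Pdef Zp by simp
  have Psum: "(\<Sum>a\<in>UNIV. \<Sum>b\<in>UNIV. P a b) = 1"
    unfolding Pdef sum_divide_distrib[symmetric] using Zp Z_def by simp
  have wdef: "w b = (\<Sum>a\<in>UNIV. P a b)" for b unfolding w_def P_def cond_j_def by simp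
  have Mnn: "M b a \<ge> 0" for a b unfolding M_def by simp
  have Msum: "(\<Sum>a\<in>UNIV. M b a) = 1" for b unfolding M_def
    using sum_pmf_eq_1[of UNIV "pth (mask1 i (x0(j := b)))"] by simp
  have upd: "(x0(j := b))(i := a) = x0(i := a, j := b)" for a b
    using assms(1) by (simp add: fun_upd_twist)
  have Qdef: "Q b a = P a b / w b" for a b
  proof -
    have "w b = (\<Sum>a\<in>UNIV. pmf p (x0(i := a, j := b))) / Z"
      unfolding wdef Pdef sum_divide_distrib[symmetric] by simp
    thus ?thesis unfolding Q_def cond_tok_def upd Pdef using Zp by simp
  qed
  have PQ: "P a b = w b * Q b a" for a b
  proof (cases "w b = 0")
    case True
    have "P a b \<le> w b" unfolding wdef using Pnn by (intro member_le_sum) auto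
    thus ?thesis using True Pnn[of a b] by simp
  next
    case False thus ?thesis by (simp add: Qdef)
  qed
  have wnn: "w b \<ge> 0" for b using wdef Pnn by (simp add: sum_nonneg)
  show ?thesis
  proof (cases "\<exists>b. w b > 0 \<and> (\<exists>a. Q b a > 0 \<and> M b a = 0)")
    case True
    then obtain b where b: "w b > 0" "\<exists>a. Q b a > 0 \<and> M b a = 0" by blast
    have "ereal (w b) * KL (Q b) (M b) = \<infinity>"
      using b unfolding KL_def by simp
    hence "(\<Sum>b\<in>UNIV. ereal (w b) * KL (Q b) (M b)) = \<infinity>"
      by (subst sum_Pinfty) auto
    thus ?thesis unfolding w_def Q_def M_def by simp
  next
    case False
    have pos: "Q b a > 0 \<and> M b a > 0" if "P a b > 0" for a b
    proof -
      have "w b \<noteq> 0" using that PQ[of a b] by auto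
      hence wp: "w b > 0" using wnn[of b] by simp
      hence Qp: "Q b a > 0" using that Qdef by simp
      thus ?thesis using False wp Mnn[of b a] by force
    qed
    have core': "\<bar>(\<Sum>a\<in>UNIV. \<Sum>b\<in>UNIV. P a b * (ln (M b a) - ln (\<Sum>b\<in>UNIV. w b * M b a)))
         - (\<Sum>a\<in>UNIV. \<Sum>b\<in>UNIV. P a b * (ln (Q b a) - ln (\<Sum>b\<in>UNIV. w b * Q b a)))\<bar>
       \<le> (\<Sum>a\<in>UNIV. \<Sum>b\<in>UNIV. P a b * (ln (Q b a) - ln (M b a)))"
      by (rule core[OF Pnn Psum Mnn Msum wdef PQ pos])
    have KLb: "ereal (w b) * KL (Q b) (M b) = ereal (\<Sum>a\<in>UNIV. P a b * (ln (Q b a) - ln (M b a)))" for b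
    proof (cases "w b = 0")
      case True
      hence "P a b = 0" for a using PQ by simp
      hence e2: "(\<Sum>a\<in>UNIV. P a b * (ln (Q b a) - ln (M b a))) = 0" by simp
      show ?thesis unfolding e2 True zero_ereal_def[symmetric] by (rule ereal_zero_mult)
    next
      case F: False
      hence wp: "w b > 0" using wnn[of b] by simp
      have nKL: "\<not> (\<exists>a. Q b a > 0 \<and> M b a = 0)" using False wp by blast
      have "(\<Sum>a\<in>UNIV. P a b * (ln (Q b a) - ln (M b a)))
          = (\<Sum>a\<in>{a. Q b a > 0}. P a b * (ln (Q b a) - ln (M b a)))"
      proof (rule sum.mono_neutral_right)
        show "\<forall>a\<in>UNIV - {a. Q b a > 0}. P a b * (ln (Q b a) - ln (M b a)) = 0"
        proof
          fix a assume "a \<in> UNIV - {a. Q b a > 0}"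
          hence "\<not> Q b a > 0" by simp
          moreover have "Q b a \<ge> 0" using Qdef Pnn[of a b] wnn[of b] by simp
          ultimately have "Q b a = 0" by simp
          thus "P a b * (ln (Q b a) - ln (M b a)) = 0" using PQ[of a b] by simp
        qed
      qed auto
      also have "\<dots> = w b * (\<Sum>a\<in>{a. Q b a > 0}. Q b a * ln (Q b a / M b a))"
        unfolding sum_distrib_left
      proof (intro sum.cong refl)
        fix a assume "a \<in> {a. Q b a > 0}"
        hence "Q b a > 0" "M b a > 0" using nKL Mnn[of b a] by (auto simp: le_less)
        thus "P a b * (ln (Q b a) - ln (M b a)) = w b * (Q b a * ln (Q b a / M b a))"
          by (simp add: PQ ln_div)
      qed
      finally show ?thesis unfolding KL_def using nKL by simp
    qed
    have "(\<Sum>b\<in>UNIV. ereal (w b) * KL (Q b) (M b))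
        = ereal (\<Sum>a\<in>UNIV. \<Sum>b\<in>UNIV. P a b * (ln (Q b a) - ln (M b a)))"
      unfolding KLb sum_ereal by (subst sum.swap) (rule refl)
    moreover have "I_model p pth i j x0 = (\<Sum>a\<in>UNIV. \<Sum>b\<in>UNIV. P a b * (ln (M b a) - ln (\<Sum>b\<in>UNIV. w b * M b a)))"
      unfolding I_model_def P_def M_def w_def by simp
    moreover have "I_true p i j x0 = (\<Sum>a\<in>UNIV. \<Sum>b\<in>UNIV. P a b * (ln (Q b a) - ln (\<Sum>b\<in>UNIV. w b * Q b a)))"
      unfolding I_true_def P_def Q_def w_def by simp
    ultimately show ?thesis using core' unfolding w_def Q_def M_def by simp
  qed
qed

end
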